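(* Let $(\Gamma,w)$ and $(\Gamma',w')$ be loopless vertex-weighted metric graphs with genus $g$ and $g'$ respectively, and let $\phi:(\Gamma,w)\to(\Gamma',w')$ be a pseudo-harmonic morphism with respect to loopless models $(G,\ell)$ and $(G',\ell')$. Writing $v'=\phi(v)$: (i) $K_{(\Gamma,w)}=\phi^*K_{(\Gamma',w')}+R_\phi$, where $$R_\phi=\sum_{v\in V(G)}\Big(2\big(M_\phi(v)-1+w(v)-M_\phi(v)w'(v')\big)-\sum_{e\in E_v(G)}(U_\phi(e)-1)\Big)(v);$$ (ii) $$2g-2=\deg(\phi)(2g'-2)+\sum_{v\in V(G)}2\big(M_\phi(v)-1+w(v)-M_\phi(v)w'(v')\big)-\sum_{v\in V(G)}\sum_{e\in E_v(G)}(U_\phi(e)-1).$$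
   Context: A vertex-weighted metric graph $(\Gamma,w)$ with loopless model $(G,\ell)$: $G$ a finite connected loopless multigraph, $\ell:E(G)\to\mathbb{R}_{>0}$, $w:V(G)\to\mathbb{Z}_{\ge0}$. $val(v)$ is the number of edges incident to $v$, $E_v(G)$ the set of them. Genus: $g(\Gamma,w)=|E(G)|-|V(G)|+1+\sum_{v\in V(G)}w(v)$. Canonical divisor: $K_{(\Gamma,w)}=\sum_{v\in V(G)}(val(v)-2+2w(v))(v)$. A morphism of loopless models $\phi:(G,\ell)\to(G',\ell')$ is a map $V(G)\cup E(G)\to V(G')\cup E(G')$ with $\phi(V(G))\subseteq V(G')$, such that for each edge $e=xy$ either $\phi(e)\in V(G')$ and $\phi(x)=\phi(e)=\phi(y)$ (then $U_\phi(e)=0$), or $\phi(e)$ is an edge between $\phi(x),\phi(y)$ and $U_\phi(e)=\ell'(\phi(e))/\ell(e)$ is a positive integer. $\phi$ is pseudo-harmonic if for every $v\in V(G)$ the number $M_\phi(v)=\sum_{e\in E(G),v\in e,\phi(e)=e'}U_\phi(e)$ is the same for all $e'\in E(G')$ incident to $\phi(v)$. $\deg(\phi)=\sum_{\phi(e)=e'}U_\phi(e)$ for any $e'\in E(G')$ ($0$ if $G'$ has no edges). Pullback: $(\phi^*D')(v)=M_\phi(v)D'(\phi(v))$ for $v\in V(G)$. *)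

theory Defs
  imports Complex_Main
begin

text \<open>A vertex-weighted metric graph given through a loopless model (G, ell, w).
  Edges are abstract elements (so multigraphs are allowed); each edge has a set of
  two distinct endpoints.\<close>

record ('v, 'e) wgraph =
  verts :: "'v set"
  edges :: "'e set"
  ends  :: "'e \<Rightarrow> 'v set"
  len   :: "'e \<Rightarrow> real"
  wt    :: "'v \<Rightarrow> nat"

definition adj :: "('v, 'e) wgraph \<Rightarrow> ('v \<times> 'v) set" where
  "adj G = {(x, y). \<exists>e\<in>edges G. ends G e = {x, y}}"

definition loopless_model :: "('v, 'e) wgraph \<Rightarrow> bool" where
  "loopless_model G \<longleftrightarrow>
     finite (verts G) \<and> finite (edges G) \<and> verts G \<noteq> {} \<and>
     (\<forall>e\<in>edges G. card (ends G e) = 2 \<and> ends G e \<subseteq> verts G \<and> len G e > 0) \<and>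
     (\<forall>u\<in>verts G. \<forall>v\<in>verts G. (u, v) \<in> (adj G)\<^sup>*)"

definition inc_edges :: "('v, 'e) wgraph \<Rightarrow> 'v \<Rightarrow> 'e set" where
  "inc_edges G v = {e \<in> edges G. v \<in> ends G e}"

definition val :: "('v, 'e) wgraph \<Rightarrow> 'v \<Rightarrow> nat" where
  "val G v = card (inc_edges G v)"

definition genus :: "('v, 'e) wgraph \<Rightarrow> int" where
  "genus G = int (card (edges G)) - int (card (verts G)) + 1 + (\<Sum>v\<in>verts G. int (wt G v))"

definition canonical :: "('v, 'e) wgraph \<Rightarrow> 'v \<Rightarrow> int" where
  "canonical G v = int (val G v) - 2 + 2 * int (wt G v)"

text \<open>A morphism of loopless models is given by a vertex map fV and an edge map fE,
  where fE e = Inl v' (edge contracted to vertex v') or Inr e' (edge mapped to edge e').\<close>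

definition morphism ::
  "('v, 'e) wgraph \<Rightarrow> ('w, 'f) wgraph \<Rightarrow> ('v \<Rightarrow> 'w) \<Rightarrow> ('e \<Rightarrow> 'w + 'f) \<Rightarrow> bool" where
  "morphism G G' fV fE \<longleftrightarrow>
     (\<forall>v\<in>verts G. fV v \<in> verts G') \<and>
     (\<forall>e\<in>edges G.
        (\<exists>v'\<in>verts G'. fE e = Inl v' \<and> (\<forall>x\<in>ends G e. fV x = v')) \<or>
        (\<exists>e'\<in>edges G'. fE e = Inr e' \<and> ends G' e' = fV ` ends G e \<and>
            (\<exists>n::nat. n > 0 \<and> len G' e' / len G e = real n)))"

definition U :: "('v, 'e) wgraph \<Rightarrow> ('w, 'f) wgraph \<Rightarrow> ('e \<Rightarrow> 'w + 'f) \<Rightarrow> 'e \<Rightarrow> int" where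
  "U G G' fE e = (case fE e of Inl _ \<Rightarrow> 0 | Inr e' \<Rightarrow> \<lfloor>len G' e' / len G e\<rfloor>)"

definition Mloc ::
  "('v, 'e) wgraph \<Rightarrow> ('w, 'f) wgraph \<Rightarrow> ('e \<Rightarrow> 'w + 'f) \<Rightarrow> 'v \<Rightarrow> 'f \<Rightarrow> int" where
  "Mloc G G' fE v e' = (\<Sum>e\<in>{e \<in> edges G. v \<in> ends G e \<and> fE e = Inr e'}. U G G' fE e)"

definition pseudo_harmonic ::
  "('v, 'e) wgraph \<Rightarrow> ('w, 'f) wgraph \<Rightarrow> ('v \<Rightarrow> 'w) \<Rightarrow> ('e \<Rightarrow> 'w + 'f) \<Rightarrow> bool" where
  "pseudo_harmonic G G' fV fE \<longleftrightarrow> morphism G G' fV fE \<and>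
     (\<forall>v\<in>verts G. \<forall>e1\<in>inc_edges G' (fV v). \<forall>e2\<in>inc_edges G' (fV v).
        Mloc G G' fE v e1 = Mloc G G' fE v e2)"

text \<open>M_phi(v): the common value; by convention 0 if phi(v) has no incident edge.\<close>
definition M ::
  "('v, 'e) wgraph \<Rightarrow> ('w, 'f) wgraph \<Rightarrow> ('v \<Rightarrow> 'w) \<Rightarrow> ('e \<Rightarrow> 'w + 'f) \<Rightarrow> 'v \<Rightarrow> int" where
  "M G G' fV fE v =
     (if inc_edges G' (fV v) = {} then 0
      else Mloc G G' fE v (SOME e'. e' \<in> inc_edges G' (fV v)))"

definition deg :: "('v, 'e) wgraph \<Rightarrow> ('w, 'f) wgraph \<Rightarrow> ('e \<Rightarrow> 'w + 'f) \<Rightarrow> int" where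
  "deg G G' fE =
     (if edges G' = {} then 0
      else (\<Sum>e\<in>{e \<in> edges G. fE e = Inr (SOME e'. e' \<in> edges G')}. U G G' fE e))"

definition pullback ::
  "('v, 'e) wgraph \<Rightarrow> ('w, 'f) wgraph \<Rightarrow> ('v \<Rightarrow> 'w) \<Rightarrow> ('e \<Rightarrow> 'w + 'f) \<Rightarrow> ('w \<Rightarrow> int) \<Rightarrow> 'v \<Rightarrow> int" where
  "pullback G G' fV fE D' v = M G G' fV fE v * D' (fV v)"

definition ramification ::
  "('v, 'e) wgraph \<Rightarrow> ('w, 'f) wgraph \<Rightarrow> ('v \<Rightarrow> 'w) \<Rightarrow> ('e \<Rightarrow> 'w + 'f) \<Rightarrow> 'v \<Rightarrow> int" where
  "ramification G G' fV fE v =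
     2 * (M G G' fV fE v - 1 + int (wt G v) - M G G' fV fE v * int (wt G' (fV v)))
     - (\<Sum>e\<in>inc_edges G v. U G G' fE e - 1)"

end

theory Submission
  imports Defs
begin

lemma handshake:
  assumes "loopless_model G"
  shows "(\<Sum>v\<in>verts G. int (val G v)) = 2 * int (card (edges G))"
proof -
  have fV: "finite (verts G)" and fE: "finite (edges G)"
    and ed: "\<And>e. e \<in> edges G \<Longrightarrow> card (ends G e) = 2 \<and> ends G e \<subseteq> verts G"
    using assms unfolding loopless_model_def by auto
  have "\<And>v. int (val G v) = (\<Sum>e\<in>edges G. if v \<in> ends G e then 1 else 0)"
    unfolding val_def inc_edges_def using fE by (simp add: sum.If_cases Int_def)
  hence "(\<Sum>v\<in>verts G. int (val G v)) =
     (\<Sum>v\<in>verts G. \<Sum>e\<in>edges G. if v \<in> ends G e then 1 else 0)" by simp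
  also have "\<dots> = (\<Sum>e\<in>edges G. \<Sum>v\<in>verts G. if v \<in> ends G e then 1 else 0)"
    by (rule sum.swap)
  also have "\<dots> = (\<Sum>e\<in>edges G. (2::int))"
  proof (rule sum.cong)
    fix e assume "e \<in> edges G"
    with ed have c: "card (ends G e) = 2" and s: "ends G e \<subseteq> verts G" by auto
    have "(\<Sum>v\<in>verts G. if v \<in> ends G e then 1 else (0::int)) = int (card (verts G \<inter> ends G e))"
      using fV by (simp add: sum.If_cases)
    also have "verts G \<inter> ends G e = ends G e" using s by auto
    finally show "(\<Sum>v\<in>verts G. if v \<in> ends G e then 1 else (0::int)) = 2" using c by simp
  qed simp
  finally show ?thesis by simp
qed

lemma sum_canonical:
  assumes "loopless_model G"
  shows "(\<Sum>v\<in>verts G. canonical G v) = 2 * genus G - 2"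
proof -
  have "(\<Sum>v\<in>verts G. canonical G v) =
     (\<Sum>v\<in>verts G. int (val G v)) - (\<Sum>v\<in>verts G. 2) + 2 * (\<Sum>v\<in>verts G. int (wt G v))"
    unfolding canonical_def by (simp add: sum.distrib sum_subtractf sum_distrib_left)
  thus ?thesis using handshake[OF assms] unfolding genus_def by simp
qed

lemma local_sum:
  assumes G: "loopless_model G" and G': "loopless_model G'"
    and ph: "pseudo_harmonic G G' fV fE" and v: "v \<in> verts G"
  shows "(\<Sum>e\<in>inc_edges G v. U G G' fE e) = M G G' fV fE v * int (val G' (fV v))"
proof -
  have mor: "morphism G G' fV fE" using ph unfolding pseudo_harmonic_def by simp
  have fE: "finite (edges G)" using G unfolding loopless_model_def by simp
  have fE': "finite (edges G')" using G' unfolding loopless_model_def by simp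
  define S where "S = {e \<in> inc_edges G v. \<exists>e'. fE e = Inr e'}"
  define T where "T = inc_edges G' (fV v)"
  define g where "g = (\<lambda>e. case fE e of Inl _ \<Rightarrow> undefined | Inr e' \<Rightarrow> e')"
  have fS: "finite S" using fE unfolding S_def inc_edges_def by simp
  have fT: "finite T" using fE' unfolding T_def inc_edges_def by simp
  have "(\<Sum>e\<in>inc_edges G v. U G G' fE e) = (\<Sum>e\<in>S. U G G' fE e)"
  proof (rule sum.mono_neutral_right)
    show "finite (inc_edges G v)" using fE unfolding inc_edges_def by simp
    show "S \<subseteq> inc_edges G v" unfolding S_def by auto
    show "\<forall>i\<in>inc_edges G v - S. U G G' fE i = 0"
      unfolding S_def U_def by (auto split: sum.split)
  qed
  also have "\<dots> = (\<Sum>e'\<in>T. \<Sum>e\<in>{x. x \<in> S \<and> g x = e'}. U G G' fE e)"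
  proof (rule sum.group[symmetric, OF fS fT])
    show "g ` S \<subseteq> T"
    proof
      fix y assume "y \<in> g ` S"
      then obtain e e' where e: "e \<in> edges G" "v \<in> ends G e" "fE e = Inr e'" and y: "y = e'"
        unfolding S_def g_def inc_edges_def by auto
      from mor e have "e' \<in> edges G' \<and> ends G' e' = fV ` ends G e"
        unfolding morphism_def by fastforce
      thus "y \<in> T" using e y unfolding T_def inc_edges_def by auto
    qed
  qed
  also have "\<dots> = (\<Sum>e'\<in>T. Mloc G G' fE v e')"
  proof (rule sum.cong[OF refl])
    fix e' assume "e' \<in> T"
    have "{x. x \<in> S \<and> g x = e'} = {e \<in> edges G. v \<in> ends G e \<and> fE e = Inr e'}"
      unfolding S_def g_def inc_edges_def by auto
    thus "(\<Sum>e\<in>{x. x \<in> S \<and> g x = e'}. U G G' fE e) = Mloc G G' fE v e'"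
      unfolding Mloc_def by simp
  qed
  also have "\<dots> = (\<Sum>e'\<in>T. M G G' fV fE v)"
  proof (rule sum.cong[OF refl])
    fix e' assume e': "e' \<in> T"
    hence ne: "T \<noteq> {}" by auto
    have "(SOME e'. e' \<in> T) \<in> T" using ne by (simp add: some_in_eq)
    with e' ph v have "Mloc G G' fE v e' = Mloc G G' fE v (SOME e'. e' \<in> T)"
      unfolding pseudo_harmonic_def T_def by blast
    thus "Mloc G G' fE v e' = M G G' fV fE v" using ne unfolding M_def T_def by simp
  qed
  also have "\<dots> = M G G' fV fE v * int (val G' (fV v))"
    unfolding val_def T_def by simp
  finally show ?thesis .
qed

lemma fiber_edge:
  assumes G: "loopless_model G" and G': "loopless_model G'"
    and ph: "pseudo_harmonic G G' fV fE" and e': "e' \<in> edges G'" and a: "a \<in> ends G' e'"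
  shows "(\<Sum>v\<in>{v \<in> verts G. fV v = a}. M G G' fV fE v) =
         (\<Sum>e\<in>{e \<in> edges G. fE e = Inr e'}. U G G' fE e)"
proof -
  have mor: "morphism G G' fV fE" using ph unfolding pseudo_harmonic_def by simp
  have fV: "finite (verts G)" and fE: "finite (edges G)"
    and ed: "\<And>e. e \<in> edges G \<Longrightarrow> card (ends G e) = 2 \<and> ends G e \<subseteq> verts G"
    using G unfolding loopless_model_def by auto
  have ed': "card (ends G' e') = 2" using G' e' unfolding loopless_model_def by auto
  define A where "A = {v \<in> verts G. fV v = a}"
  define B where "B = {e \<in> edges G. fE e = Inr e'}"
  have fA: "finite A" using fV unfolding A_def by simp
  have fB: "finite B" using fE unfolding B_def by simp
  have "(\<Sum>v\<in>A. M G G' fV fE v) = (\<Sum>v\<in>A. \<Sum>e\<in>{e. e \<in> B \<and> v \<in> ends G e}. U G G' fE e)"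
  proof (rule sum.cong[OF refl])
    fix v assume v: "v \<in> A"
    define T where "T = inc_edges G' (fV v)"
    have eT: "e' \<in> T" using v a e' unfolding A_def T_def inc_edges_def by auto
    hence ne: "T \<noteq> {}" by auto
    have "(SOME e'. e' \<in> T) \<in> T" using ne by (simp add: some_in_eq)
    with eT ph v have "Mloc G G' fE v e' = Mloc G G' fE v (SOME e'. e' \<in> T)"
      unfolding pseudo_harmonic_def T_def A_def by blast
    hence "M G G' fV fE v = Mloc G G' fE v e'" using ne unfolding M_def T_def by simp
    also have "\<dots> = (\<Sum>e\<in>{e. e \<in> B \<and> v \<in> ends G e}. U G G' fE e)"
      unfolding Mloc_def B_def by (rule sum.cong) auto
    finally show "M G G' fV fE v = (\<Sum>e\<in>{e. e \<in> B \<and> v \<in> ends G e}. U G G' fE e)" .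
  qed
  also have "\<dots> = (\<Sum>e\<in>B. \<Sum>v\<in>{v. v \<in> A \<and> v \<in> ends G e}. U G G' fE e)"
    by (rule sum.swap_restrict[OF fA fB])
  also have "\<dots> = (\<Sum>e\<in>B. U G G' fE e)"
  proof (rule sum.cong[OF refl])
    fix e assume eB: "e \<in> B"
    hence eE: "e \<in> edges G" and fe: "fE e = Inr e'" unfolding B_def by auto
    from ed[OF eE] obtain x y where xy: "ends G e = {x, y}" "x \<noteq> y" "x \<in> verts G" "y \<in> verts G"
      by (auto simp: card_2_iff)
    from mor eE fe have im: "ends G' e' = fV ` ends G e"
      unfolding morphism_def by fastforce
    with ed' xy have dif: "fV x \<noteq> fV y" by (auto simp: card_2_iff)
    from a im xy have "fV x = a \<or> fV y = a" by auto
    hence "{v. v \<in> A \<and> v \<in> ends G e} = {x} \<or> {v. v \<in> A \<and> v \<in> ends G e} = {y}"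
      using dif xy unfolding A_def by auto
    thus "(\<Sum>v\<in>{v. v \<in> A \<and> v \<in> ends G e}. U G G' fE e) = U G G' fE e" by auto
  qed
  finally show ?thesis unfolding A_def B_def .
qed

lemma fiber_deg:
  assumes G: "loopless_model G" and G': "loopless_model G'"
    and ph: "pseudo_harmonic G G' fV fE" and ne: "edges G' \<noteq> {}" and b: "b \<in> verts G'"
  shows "(\<Sum>v\<in>{v \<in> verts G. fV v = b}. M G G' fV fE v) = deg G G' fE"
proof -
  define S where "S = (\<lambda>b. \<Sum>v\<in>{v \<in> verts G. fV v = b}. M G G' fV fE v)"
  define e0 where "e0 = (SOME e'. e' \<in> edges G')"
  have e0: "e0 \<in> edges G'" using ne unfolding e0_def by (simp add: some_in_eq)
  then have "card (ends G' e0) = 2" "ends G' e0 \<subseteq> verts G'"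
    using G' unfolding loopless_model_def by auto
  then obtain a0 where a0: "a0 \<in> ends G' e0" "a0 \<in> verts G'" by (auto simp: card_2_iff)
  have Sa0: "S a0 = deg G G' fE"
    using fiber_edge[OF G G' ph e0 a0(1)] ne unfolding S_def deg_def e0_def by simp
  have stepS: "S x = S y" if "(x, y) \<in> adj G'" for x y
  proof -
    from that obtain e' where e': "e' \<in> edges G'" "ends G' e' = {x, y}" unfolding adj_def by auto
    show ?thesis using fiber_edge[OF G G' ph e'(1), of x] fiber_edge[OF G G' ph e'(1), of y] e'(2)
      unfolding S_def by simp
  qed
  have "(a0, b) \<in> (adj G')\<^sup>*" using G' a0 b unfolding loopless_model_def by auto
  hence "S b = S a0"
  proof (induction rule: rtrancl_induct)
    case base then show ?case by simp
  next
    case (step y z) then show ?case using stepS by metis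
  qed
  thus ?thesis using Sa0 unfolding S_def by simp
qed

theorem theorem6p10:
  fixes G :: "('v, 'e) wgraph" and G' :: "('w, 'f) wgraph"
    and fV :: "'v \<Rightarrow> 'w" and fE :: "'e \<Rightarrow> 'w + 'f"
  assumes "loopless_model G" and "loopless_model G'"
    and "pseudo_harmonic G G' fV fE"
  shows "(\<forall>v\<in>verts G. canonical G v =
            pullback G G' fV fE (canonical G') v + ramification G G' fV fE v)
       \<and> 2 * genus G - 2 =
            deg G G' fE * (2 * genus G' - 2)
            + (\<Sum>v\<in>verts G. 2 * (M G G' fV fE v - 1 + int (wt G v)
                                   - M G G' fV fE v * int (wt G' (fV v))))
            - (\<Sum>v\<in>verts G. \<Sum>e\<in>inc_edges G v. U G G' fE e - 1)"
proof -
  note G = assms(1) and G' = assms(2) and ph = assms(3)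
  have mor: "morphism G G' fV fE" using ph unfolding pseudo_harmonic_def by simp
  have fV: "finite (verts G)" and fE: "finite (edges G)"
    using G unfolding loopless_model_def by auto
  have fV': "finite (verts G')" using G' unfolding loopless_model_def by auto
  have part1: "canonical G v = pullback G G' fV fE (canonical G') v + ramification G G' fV fE v"
    if v: "v \<in> verts G" for v
  proof -
    have fin: "finite (inc_edges G v)" using fE unfolding inc_edges_def by simp
    have "(\<Sum>e\<in>inc_edges G v. U G G' fE e - 1) = (\<Sum>e\<in>inc_edges G v. U G G' fE e) - int (val G v)"
      unfolding val_def by (simp add: sum_subtractf)
    thus ?thesis using local_sum[OF G G' ph v]
      unfolding canonical_def pullback_def ramification_def by (simp add: algebra_simps)
  qed
  have pb: "(\<Sum>v\<in>verts G. pullback G G' fV fE (canonical G') v) = deg G G' fE * (2 * genus G' - 2)"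
  proof (cases "edges G' = {}")
    case True
    have "M G G' fV fE v = 0" for v using True unfolding M_def inc_edges_def by simp
    thus ?thesis using True unfolding pullback_def deg_def by simp
  next
    case False
    have im: "fV ` verts G \<subseteq> verts G'" using mor unfolding morphism_def by auto
    have "(\<Sum>v\<in>verts G. pullback G G' fV fE (canonical G') v) =
       (\<Sum>b\<in>verts G'. \<Sum>v\<in>{x. x \<in> verts G \<and> fV x = b}. pullback G G' fV fE (canonical G') v)"
      by (rule sum.group[symmetric, OF fV fV' im])
    also have "\<dots> = (\<Sum>b\<in>verts G'. (\<Sum>v\<in>{x \<in> verts G. fV x = b}. M G G' fV fE v) * canonical G' b)"
      unfolding pullback_def by (rule sum.cong[OF refl]) (simp add: sum_distrib_right)
    also have "\<dots> = (\<Sum>b\<in>verts G'. deg G G' fE * canonical G' b)"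
      using fiber_deg[OF G G' ph False] by simp
    also have "\<dots> = deg G G' fE * (2 * genus G' - 2)"
      using sum_canonical[OF G'] by (simp add: sum_distrib_left[symmetric])
    finally show ?thesis .
  qed
  have "2 * genus G - 2 = (\<Sum>v\<in>verts G. canonical G v)" using sum_canonical[OF G] by simp
  also have "\<dots> = (\<Sum>v\<in>verts G. pullback G G' fV fE (canonical G') v + ramification G G' fV fE v)"
    using part1 by simp
  also have "\<dots> = deg G G' fE * (2 * genus G' - 2)
            + (\<Sum>v\<in>verts G. 2 * (M G G' fV fE v - 1 + int (wt G v)
                                   - M G G' fV fE v * int (wt G' (fV v))))
            - (\<Sum>v\<in>verts G. \<Sum>e\<in>inc_edges G v. U G G' fE e - 1)"
    unfolding sum.distrib pb ramification_def by (simp add: sum_subtractf)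
  finally show ?thesis using part1 by blast
qed

end
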